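(* Let $L$ be an i--lattice. Then: (1) for all $\theta\in{\rm Con}(L)$, $Cg_{L,\mathbb{I}}(\theta)=\theta\vee\theta'$; (2) for all $U\subseteq L^2$, $Cg_{L,\mathbb{I}}(U)=Cg_L(U)\vee(Cg_L(U))'=Cg_L(U)\vee Cg_L(U')$; (3) for all $a,b\in L$, $Cg_{L,\mathbb{I}}(a,b)=Cg_L(a,b)\vee(Cg_L(a,b))'=Cg_L(a,b)\vee Cg_L(a',b')$.
   Context: An i--lattice is a lattice $L$ with a unary operation $'$ such that $a''=a$ and $a\leq b\Rightarrow b'\leq a'$. ${\rm Con}(L)$ is the lattice of lattice congruences (joins $\vee$ in ${\rm Con}(L)$). $Cg_L(U)$ is the lattice congruence generated by $U\subseteq L^2$ and $Cg_{L,\mathbb{I}}(U)$ the congruence of the i--lattice $L$ (lattice congruence preserving $'$) generated by $U$; $Cg_L(a,b)=Cg_L(\{(a,b)\})$, similarly for $Cg_{L,\mathbb{I}}(a,b)$. For $U\subseteq L^2$, $U'=\{(a',b'):(a,b)\in U\}$. *)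

theory Defs
  imports Main
begin

definition i_lattice :: "('a::lattice \<Rightarrow> 'a) \<Rightarrow> bool" where
  "i_lattice f \<longleftrightarrow> (\<forall>a. f (f a) = a) \<and> (\<forall>a b. a \<le> b \<longrightarrow> f b \<le> f a)"

definition lat_con :: "('a::lattice) rel \<Rightarrow> bool" where
  "lat_con \<theta> \<longleftrightarrow> equiv UNIV \<theta> \<and>
     (\<forall>a b c d. (a,b) \<in> \<theta> \<and> (c,d) \<in> \<theta> \<longrightarrow>
        (sup a c, sup b d) \<in> \<theta> \<and> (inf a c, inf b d) \<in> \<theta>)"

definition ilat_con :: "('a::lattice \<Rightarrow> 'a) \<Rightarrow> 'a rel \<Rightarrow> bool" where
  "ilat_con f \<theta> \<longleftrightarrow> lat_con \<theta> \<and> (\<forall>a b. (a,b) \<in> \<theta> \<longrightarrow> (f a, f b) \<in> \<theta>)"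

definition lat_Cg :: "('a::lattice) rel \<Rightarrow> 'a rel" where
  "lat_Cg U = \<Inter>{\<theta>. lat_con \<theta> \<and> U \<subseteq> \<theta>}"

definition ilat_Cg :: "('a::lattice \<Rightarrow> 'a) \<Rightarrow> 'a rel \<Rightarrow> 'a rel" where
  "ilat_Cg f U = \<Inter>{\<theta>. ilat_con f \<theta> \<and> U \<subseteq> \<theta>}"

definition con_join :: "('a::lattice) rel \<Rightarrow> 'a rel \<Rightarrow> 'a rel" where
  "con_join \<theta> \<psi> = lat_Cg (\<theta> \<union> \<psi>)"

definition prime_rel :: "('a \<Rightarrow> 'a) \<Rightarrow> 'a rel \<Rightarrow> 'a rel" where
  "prime_rel f U = {(f a, f b) | a b. (a,b) \<in> U}"

end

theory Submission
  imports Defs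
begin

lemma Inter_con: "\<forall>\<theta>\<in>S. lat_con \<theta> \<Longrightarrow> lat_con (\<Inter>S)"
proof -
  assume a: "\<forall>\<theta>\<in>S. lat_con \<theta>"
  have e: "\<And>\<theta>. \<theta> \<in> S \<Longrightarrow> equiv UNIV \<theta>" using a unfolding lat_con_def by blast
  have o: "\<And>\<theta> a b c d. \<theta> \<in> S \<Longrightarrow> (a,b) \<in> \<theta> \<Longrightarrow> (c,d) \<in> \<theta> \<Longrightarrow>
        (sup a c, sup b d) \<in> \<theta> \<and> (inf a c, inf b d) \<in> \<theta>"
    using a unfolding lat_con_def by blast
  have r: "refl (\<Inter>S)" unfolding refl_on_def
  proof (intro conjI ballI)
    fix x assume "x \<in> (UNIV::'a set)"
    show "(x,x) \<in> \<Inter>S"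
    proof (rule InterI)
      fix \<theta> assume "\<theta> \<in> S" then have "equiv UNIV \<theta>" by (rule e)
      then show "(x,x) \<in> \<theta>" unfolding equiv_def refl_on_def by blast
    qed
  qed
  have s: "sym (\<Inter>S)" unfolding sym_def
  proof (intro allI impI InterI)
    fix x y \<theta> assume xy: "(x,y) \<in> \<Inter>S" and t: "\<theta> \<in> S"
    then have "(x,y) \<in> \<theta>" by blast
    moreover have "sym \<theta>" using e[OF t] unfolding equiv_def by blast
    ultimately show "(y,x) \<in> \<theta>" unfolding sym_def by blast
  qed
  have t: "trans (\<Inter>S)" unfolding trans_def
  proof (intro allI impI InterI)
    fix x y z \<theta> assume xy: "(x,y) \<in> \<Inter>S" and yz: "(y,z) \<in> \<Inter>S" and t: "\<theta> \<in> S"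
    then have "(x,y) \<in> \<theta>" "(y,z) \<in> \<theta>" by blast+
    moreover have "trans \<theta>" using e[OF t] unfolding equiv_def by blast
    ultimately show "(x,z) \<in> \<theta>" unfolding trans_def by blast
  qed
  have op: "(sup a c, sup b d) \<in> \<Inter>S \<and> (inf a c, inf b d) \<in> \<Inter>S"
    if "(a,b) \<in> \<Inter>S" "(c,d) \<in> \<Inter>S" for a b c d
  proof -
    have "\<And>\<theta>. \<theta> \<in> S \<Longrightarrow> (sup a c, sup b d) \<in> \<theta> \<and> (inf a c, inf b d) \<in> \<theta>"
    proof -
      fix \<theta> assume t: "\<theta> \<in> S"
      with that have "(a,b) \<in> \<theta>" "(c,d) \<in> \<theta>" by blast+
      then show "(sup a c, sup b d) \<in> \<theta> \<and> (inf a c, inf b d) \<in> \<theta>" by (rule o[OF t])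
    qed
    then show ?thesis by blast
  qed
  show ?thesis unfolding lat_con_def equiv_def using r s t op by auto
qed

lemma Inter_icon: "\<forall>\<theta>\<in>S. ilat_con f \<theta> \<Longrightarrow> ilat_con f (\<Inter>S)"
proof -
  assume a: "\<forall>\<theta>\<in>S. ilat_con f \<theta>"
  then have "\<forall>\<theta>\<in>S. lat_con \<theta>" unfolding ilat_con_def by simp
  then have "lat_con (\<Inter>S)" by (rule Inter_con)
  moreover have "(f x, f y) \<in> \<Inter>S" if "(x,y) \<in> \<Inter>S" for x y
  proof (rule InterI)
    fix \<theta> assume "\<theta> \<in> S"
    with that a show "(f x, f y) \<in> \<theta>" unfolding ilat_con_def by blast
  qed
  ultimately show ?thesis unfolding ilat_con_def by blast
qed

lemma Cg_con: "lat_con (lat_Cg U)"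
  unfolding lat_Cg_def by (rule Inter_con) blast

lemma Cg_sub: "U \<subseteq> lat_Cg U"
  unfolding lat_Cg_def by blast

lemma Cg_min: "lat_con \<theta> \<Longrightarrow> U \<subseteq> \<theta> \<Longrightarrow> lat_Cg U \<subseteq> \<theta>"
  unfolding lat_Cg_def by blast

lemma Cg_id: "lat_con \<theta> \<Longrightarrow> lat_Cg \<theta> = \<theta>"
  using Cg_sub Cg_min by blast

lemma f_sup:
  assumes "i_lattice f" shows "f (sup a c) = inf (f a) (f c)"
proof -
  have inv: "\<And>x. f (f x) = x" and an: "\<And>x y. x \<le> y \<Longrightarrow> f y \<le> f x"
    using assms unfolding i_lattice_def by auto
  have 1: "f (sup a c) \<le> inf (f a) (f c)"
    using an[of a "sup a c"] an[of c "sup a c"] by simp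
  have "f (f a) \<le> f (inf (f a) (f c))" using an[of "inf (f a) (f c)" "f a"] by simp
  then have "a \<le> f (inf (f a) (f c))" by (simp only: inv)
  moreover have "f (f c) \<le> f (inf (f a) (f c))" using an[of "inf (f a) (f c)" "f c"] by simp
  then have "c \<le> f (inf (f a) (f c))" by (simp only: inv)
  ultimately have "sup a c \<le> f (inf (f a) (f c))" by simp
  then have "f (f (inf (f a) (f c))) \<le> f (sup a c)" by (rule an)
  then have "inf (f a) (f c) \<le> f (sup a c)" by (simp only: inv)
  with 1 show ?thesis by (rule antisym)
qed

lemma f_inf:
  assumes "i_lattice f" shows "f (inf a c) = sup (f a) (f c)"
proof -
  have inv: "\<And>x. f (f x) = x" using assms unfolding i_lattice_def by auto
  have "f (sup (f a) (f c)) = inf (f (f a)) (f (f c))" by (rule f_sup[OF assms])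
  then have "f (sup (f a) (f c)) = inf a c" by (simp only: inv)
  then have "f (f (sup (f a) (f c))) = f (inf a c)" by simp
  then show ?thesis by (simp only: inv)
qed

lemma prime_prime:
  assumes "i_lattice f" shows "prime_rel f (prime_rel f U) = U"
proof -
  have inv: "\<And>x. f (f x) = x" using assms unfolding i_lattice_def by auto
  show ?thesis
  proof (intro set_eqI iffI)
    fix p assume "p \<in> prime_rel f (prime_rel f U)"
    then obtain a b where "p = (f (f a), f (f b))" "(a,b) \<in> U"
      unfolding prime_rel_def by blast
    then show "p \<in> U" by (simp only: inv)
  next
    fix p assume pu: "p \<in> U"
    obtain a b where p: "p = (a,b)" by (cases p)
    have "(f a, f b) \<in> prime_rel f U" using pu p unfolding prime_rel_def by blast
    then have "(f (f a), f (f b)) \<in> prime_rel f (prime_rel f U)"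
      unfolding prime_rel_def by blast
    then show "p \<in> prime_rel f (prime_rel f U)" using p by (simp only: inv)
  qed
qed

lemma prime_mono: "U \<subseteq> V \<Longrightarrow> prime_rel f U \<subseteq> prime_rel f V"
  unfolding prime_rel_def by blast

lemma prime_Un: "prime_rel f (U \<union> V) = prime_rel f U \<union> prime_rel f V"
  unfolding prime_rel_def by blast

lemma prime_con:
  assumes i: "i_lattice f" and c: "lat_con \<theta>"
  shows "lat_con (prime_rel f \<theta>)"
proof -
  have inv: "\<And>x. f (f x) = x" using i unfolding i_lattice_def by auto
  have mem: "(x,y) \<in> prime_rel f \<theta> \<longleftrightarrow> (f x, f y) \<in> \<theta>" for x y
  proof
    assume "(x,y) \<in> prime_rel f \<theta>"
    then obtain a b where "x = f a" "y = f b" "(a,b) \<in> \<theta>" unfolding prime_rel_def by blast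
    then show "(f x, f y) \<in> \<theta>" by (simp add: inv)
  next
    assume "(f x, f y) \<in> \<theta>"
    then have "(f (f x), f (f y)) \<in> prime_rel f \<theta>" unfolding prime_rel_def by blast
    then show "(x,y) \<in> prime_rel f \<theta>" by (simp only: inv)
  qed
  have e: "equiv UNIV \<theta>" and op: "\<And>a b c d. (a,b) \<in> \<theta> \<Longrightarrow> (c,d) \<in> \<theta> \<Longrightarrow>
        (sup a c, sup b d) \<in> \<theta> \<and> (inf a c, inf b d) \<in> \<theta>"
    using c unfolding lat_con_def by auto
  have r: "\<And>x. (x,x) \<in> \<theta>" and s: "\<And>x y. (x,y) \<in> \<theta> \<Longrightarrow> (y,x) \<in> \<theta>"
    and t: "\<And>x y z. (x,y) \<in> \<theta> \<Longrightarrow> (y,z) \<in> \<theta> \<Longrightarrow> (x,z) \<in> \<theta>"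
    using e unfolding equiv_def refl_on_def sym_def trans_def by blast+
  have "equiv UNIV (prime_rel f \<theta>)"
  proof (rule equivI)
    show "refl (prime_rel f \<theta>)" by (rule refl_onI) (auto simp: mem r)
    show "sym (prime_rel f \<theta>)" by (rule symI) (simp add: mem s)
    show "trans (prime_rel f \<theta>)" by (rule transI) (simp add: mem, erule (1) t)
    show "prime_rel f \<theta> \<subseteq> UNIV \<times> UNIV" by simp
  qed
  moreover have "(sup a c, sup b d) \<in> prime_rel f \<theta> \<and> (inf a c, inf b d) \<in> prime_rel f \<theta>"
    if "(a,b) \<in> prime_rel f \<theta>" "(c,d) \<in> prime_rel f \<theta>" for a b c d
  proof -
    have "(f a, f b) \<in> \<theta>" "(f c, f d) \<in> \<theta>" using that by (simp_all add: mem)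
    then have "(inf (f a) (f c), inf (f b) (f d)) \<in> \<theta> \<and> (sup (f a) (f c), sup (f b) (f d)) \<in> \<theta>"
      using op by blast
    then show ?thesis by (simp add: mem f_sup[OF i] f_inf[OF i])
  qed
  ultimately show ?thesis unfolding lat_con_def by blast
qed

lemma prime_Cg:
  assumes i: "i_lattice f"
  shows "prime_rel f (lat_Cg U) = lat_Cg (prime_rel f U)"
proof
  show "lat_Cg (prime_rel f U) \<subseteq> prime_rel f (lat_Cg U)"
    by (rule Cg_min[OF prime_con[OF i Cg_con]], rule prime_mono, rule Cg_sub)
  have "U \<subseteq> prime_rel f (lat_Cg (prime_rel f U))"
    using prime_mono[OF Cg_sub[of "prime_rel f U"], of f] prime_prime[OF i] by simp
  then have "lat_Cg U \<subseteq> prime_rel f (lat_Cg (prime_rel f U))"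
    by (rule Cg_min[OF prime_con[OF i Cg_con]])
  then show "prime_rel f (lat_Cg U) \<subseteq> lat_Cg (prime_rel f U)"
    using prime_mono[of "lat_Cg U" "prime_rel f (lat_Cg (prime_rel f U))" f] prime_prime[OF i]
    by simp
qed

lemma main:
  assumes i: "i_lattice f"
  shows "ilat_Cg f U = con_join (lat_Cg U) (prime_rel f (lat_Cg U))"
proof
  let ?C = "lat_Cg U"
  let ?J = "lat_Cg (?C \<union> prime_rel f ?C)"
  have "prime_rel f ?J = lat_Cg (prime_rel f (?C \<union> prime_rel f ?C))"
    by (rule prime_Cg[OF i])
  also have "prime_rel f (?C \<union> prime_rel f ?C) = prime_rel f ?C \<union> prime_rel f (prime_rel f ?C)"
    by (rule prime_Un)
  also have "\<dots> = prime_rel f ?C \<union> ?C" by (simp only: prime_prime[OF i])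
  also have "\<dots> = ?C \<union> prime_rel f ?C" by (rule Un_commute)
  finally have pj: "prime_rel f ?J = ?J" .
  have "ilat_con f ?J" unfolding ilat_con_def
  proof (intro conjI allI impI)
    show "lat_con ?J" by (rule Cg_con)
    fix a b assume "(a,b) \<in> ?J"
    then have "(f a, f b) \<in> prime_rel f ?J" unfolding prime_rel_def by blast
    then show "(f a, f b) \<in> ?J" using pj by simp
  qed
  moreover have "U \<subseteq> ?J"
  proof -
    have "U \<subseteq> ?C" by (rule Cg_sub)
    also have "?C \<subseteq> ?C \<union> prime_rel f ?C" by (rule Un_upper1)
    also have "\<dots> \<subseteq> ?J" by (rule Cg_sub)
    finally show ?thesis .
  qed
  ultimately have "?J \<in> {\<theta>. ilat_con f \<theta> \<and> U \<subseteq> \<theta>}" by simp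
  then show "ilat_Cg f U \<subseteq> con_join ?C (prime_rel f ?C)"
    unfolding ilat_Cg_def con_join_def by (rule Inter_lower)
next
  let ?C = "lat_Cg U"
  let ?I = "ilat_Cg f U"
  have ic: "ilat_con f ?I"
    unfolding ilat_Cg_def by (rule Inter_icon) blast
  have lc: "lat_con ?I" using ic unfolding ilat_con_def by blast
  have "U \<subseteq> ?I" unfolding ilat_Cg_def by blast
  then have ci: "?C \<subseteq> ?I" by (rule Cg_min[OF lc])
  have "prime_rel f ?C \<subseteq> ?I"
  proof
    fix p assume "p \<in> prime_rel f ?C"
    then obtain a b where "p = (f a, f b)" "(a,b) \<in> ?C" unfolding prime_rel_def by blast
    moreover have "(a,b) \<in> ?I" using ci calculation(2) by blast
    ultimately show "p \<in> ?I" using ic unfolding ilat_con_def by blast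
  qed
  with ci have "?C \<union> prime_rel f ?C \<subseteq> ?I" by (rule Un_least)
  then show "con_join ?C (prime_rel f ?C) \<subseteq> ?I"
    unfolding con_join_def by (rule Cg_min[OF lc])
qed

theorem lemma4p30:
  fixes f :: "'a::lattice \<Rightarrow> 'a"
  assumes "i_lattice f"
  shows "(\<forall>\<theta>. lat_con \<theta> \<longrightarrow> ilat_Cg f \<theta> = con_join \<theta> (prime_rel f \<theta>))
    \<and> (\<forall>U. ilat_Cg f U = con_join (lat_Cg U) (prime_rel f (lat_Cg U))
           \<and> con_join (lat_Cg U) (prime_rel f (lat_Cg U)) = con_join (lat_Cg U) (lat_Cg (prime_rel f U)))
    \<and> (\<forall>a b. ilat_Cg f {(a,b)} = con_join (lat_Cg {(a,b)}) (prime_rel f (lat_Cg {(a,b)}))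
           \<and> con_join (lat_Cg {(a,b)}) (prime_rel f (lat_Cg {(a,b)}))
               = con_join (lat_Cg {(a,b)}) (lat_Cg {(f a, f b)}))"
proof -
  have p: "prime_rel f {(a,b)} = {(f a, f b)}" for a b unfolding prime_rel_def by blast
  have A: "\<forall>\<theta>. lat_con \<theta> \<longrightarrow> ilat_Cg f \<theta> = con_join \<theta> (prime_rel f \<theta>)"
  proof (intro allI impI)
    fix \<theta> :: "'a rel" assume "lat_con \<theta>"
    then have "lat_Cg \<theta> = \<theta>" by (rule Cg_id)
    with main[OF assms, of \<theta>] show "ilat_Cg f \<theta> = con_join \<theta> (prime_rel f \<theta>)" by simp
  qed
  have B: "\<forall>U. ilat_Cg f U = con_join (lat_Cg U) (prime_rel f (lat_Cg U))
           \<and> con_join (lat_Cg U) (prime_rel f (lat_Cg U)) = con_join (lat_Cg U) (lat_Cg (prime_rel f U))"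
    using main[OF assms] prime_Cg[OF assms] by simp
  have C: "\<forall>a b. ilat_Cg f {(a,b)} = con_join (lat_Cg {(a,b)}) (prime_rel f (lat_Cg {(a,b)}))
           \<and> con_join (lat_Cg {(a,b)}) (prime_rel f (lat_Cg {(a,b)}))
               = con_join (lat_Cg {(a,b)}) (lat_Cg {(f a, f b)})"
    using B p by simp
  from A B C show ?thesis by blast
qed

end
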